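(* Let $(G,\prec)$ be an $\mathcal{H}$-free ordered graph and let $V[x,y]$ be a valid segment. Then the set $S(x,y)\cup\{x,y\}$ induces a capped ordered subgraph of $(G,\prec)$.
   Context: An ordered graph is a pair $(G,\prec)$ with $G$ a finite graph and $\prec$ a linear order on $V(G)$; induced subgraphs carry the restricted order. It is capped if for any $a\prec b\prec c\prec d$ with $ac,bd\in E(G)$ we have $ad\in E(G)$. For $a\prec b\prec c\prec d$ with $ac,bd\in E(G)$, $ac$ crosses $bd$. A rotation of $\prec$ is any order obtained by repeatedly making the largest element the smallest. For $u\prec v$, a crossing sequence from $u$ to $v$ is a sequence of distinct edges $e_1,\dots,e_k$ with $u$ the smaller end of $e_1$, $v$ the larger end of $e_k$, and $e_i$ crossing $e_{i+1}$ for $1\le i<k$; if $v\prec u$, a crossing sequence from $u$ to $v$ is one with respect to any rotation $\prec'$ of $\prec$ with $u\prec'v$. $\mathcal{H}$ is the family of ordered graphs containing two non-adjacent vertices $u,v$ with a crossing sequence from $u$ to $v$ and one from $v$ to $u$; $\mathcal{H}$-free means no induced ordered subgraph lies in $\mathcal{H}$. For $x\prec y$, the segment $V[x,y]$ is the set of vertices $v$ with $x\preceq v\preceq y$; similarly $V[x,y)$, $V(x,y]$, $V(x,y)$ denote the half-open and open versions. $V[x,y]$ is valid if there is a crossing sequence from $y$ to $x$. A vertex $v$ is left-reachable from $V[x,y]$ if $v\in V[x,y)$ and there is a crossing sequence from $y$ to $v$; right-reachable if $v\in V(x,y]$ and there is a crossing sequence from $v$ to $x$; $S(x,y)$ denotes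 the set of vertices that are both left- and right-reachable from $V[x,y]$. *)

theory Defs
  imports Main
begin

text \<open>An ordered graph: a finite vertex set V of a linearly ordered type 'a
 (the linear order on V is the restriction of the type's order), with a
 symmetric irreflexive edge relation E. Induced subgraphs on W \<subseteq> V
 are represented by the vertex set W (edges and order restricted).\<close>

definition base_order :: "'a::linorder set \<Rightarrow> 'a \<Rightarrow> 'a \<Rightarrow> bool" where
  "base_order V u v \<longleftrightarrow> u \<in> V \<and> v \<in> V \<and> u < v"

definition largest :: "'a set \<Rightarrow> ('a \<Rightarrow> 'a \<Rightarrow> bool) \<Rightarrow> 'a" where
  "largest V lt = (THE m. m \<in> V \<and> (\<forall>w\<in>V. w \<noteq> m \<longrightarrow> lt w m))"

text \<open>One rotation step: the largest element becomes the smallest.\<close>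
definition rot1 :: "'a set \<Rightarrow> ('a \<Rightarrow> 'a \<Rightarrow> bool) \<Rightarrow> ('a \<Rightarrow> 'a \<Rightarrow> bool)" where
  "rot1 V lt u v \<longleftrightarrow> u \<in> V \<and> v \<in> V \<and>
     (if u = largest V lt then v \<noteq> largest V lt
      else if v = largest V lt then False else lt u v)"

definition rotation :: "'a::linorder set \<Rightarrow> ('a \<Rightarrow> 'a \<Rightarrow> bool) \<Rightarrow> bool" where
  "rotation V lt \<longleftrightarrow> (\<exists>k. lt = (rot1 V ^^ k) (base_order V))"

text \<open>Edge (a,c) crosses edge (b,d) w.r.t. lt (edges written smaller end first):
 a < b < c < d.\<close>
definition crosses :: "('a \<Rightarrow> 'a \<Rightarrow> bool) \<Rightarrow> 'a \<times> 'a \<Rightarrow> 'a \<times> 'a \<Rightarrow> bool" where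
  "crosses lt e f \<longleftrightarrow> lt (fst e) (fst f) \<and> lt (fst f) (snd e) \<and> lt (snd e) (snd f)"

definition cross_seq_wrt ::
  "'a set \<Rightarrow> ('a \<Rightarrow> 'a \<Rightarrow> bool) \<Rightarrow> ('a \<Rightarrow> 'a \<Rightarrow> bool) \<Rightarrow> 'a \<Rightarrow> 'a \<Rightarrow> ('a \<times> 'a) list \<Rightarrow> bool" where
  "cross_seq_wrt V E lt u v es \<longleftrightarrow>
     es \<noteq> [] \<and> distinct es \<and>
     (\<forall>e\<in>set es. fst e \<in> V \<and> snd e \<in> V \<and> E (fst e) (snd e) \<and> lt (fst e) (snd e)) \<and>
     fst (hd es) = u \<and> snd (last es) = v \<and>
     (\<forall>i. Suc i < length es \<longrightarrow> crosses lt (es ! i) (es ! Suc i))"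

definition has_cross_seq :: "'a::linorder set \<Rightarrow> ('a \<Rightarrow> 'a \<Rightarrow> bool) \<Rightarrow> 'a \<Rightarrow> 'a \<Rightarrow> bool" where
  "has_cross_seq V E u v \<longleftrightarrow>
     (u < v \<and> (\<exists>es. cross_seq_wrt V E (base_order V) u v es)) \<or>
     (v < u \<and> (\<exists>lt es. rotation V lt \<and> lt u v \<and> cross_seq_wrt V E lt u v es))"

definition in_H :: "'a::linorder set \<Rightarrow> ('a \<Rightarrow> 'a \<Rightarrow> bool) \<Rightarrow> bool" where
  "in_H V E \<longleftrightarrow> (\<exists>u\<in>V. \<exists>v\<in>V. u \<noteq> v \<and> \<not> E u v \<and>
                    has_cross_seq V E u v \<and> has_cross_seq V E v u)"

definition H_free :: "'a::linorder set \<Rightarrow> ('a \<Rightarrow> 'a \<Rightarrow> bool) \<Rightarrow> bool" where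
  "H_free V E \<longleftrightarrow> (\<forall>W. W \<subseteq> V \<longrightarrow> \<not> in_H W E)"

definition capped :: "'a::linorder set \<Rightarrow> ('a \<Rightarrow> 'a \<Rightarrow> bool) \<Rightarrow> bool" where
  "capped V E \<longleftrightarrow> (\<forall>a\<in>V. \<forall>b\<in>V. \<forall>c\<in>V. \<forall>d\<in>V.
      a < b \<and> b < c \<and> c < d \<and> E a c \<and> E b d \<longrightarrow> E a d)"

definition valid_segment :: "'a::linorder set \<Rightarrow> ('a \<Rightarrow> 'a \<Rightarrow> bool) \<Rightarrow> 'a \<Rightarrow> 'a \<Rightarrow> bool" where
  "valid_segment V E x y \<longleftrightarrow> x \<in> V \<and> y \<in> V \<and> x < y \<and> has_cross_seq V E y x"

definition left_reachable :: "'a::linorder set \<Rightarrow> ('a \<Rightarrow> 'a \<Rightarrow> bool) \<Rightarrow> 'a \<Rightarrow> 'a \<Rightarrow> 'a \<Rightarrow> bool" where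
  "left_reachable V E x y v \<longleftrightarrow> v \<in> V \<and> x \<le> v \<and> v < y \<and> has_cross_seq V E y v"

definition right_reachable :: "'a::linorder set \<Rightarrow> ('a \<Rightarrow> 'a \<Rightarrow> bool) \<Rightarrow> 'a \<Rightarrow> 'a \<Rightarrow> 'a \<Rightarrow> bool" where
  "right_reachable V E x y v \<longleftrightarrow> v \<in> V \<and> x < v \<and> v \<le> y \<and> has_cross_seq V E v x"

definition S_set :: "'a::linorder set \<Rightarrow> ('a \<Rightarrow> 'a \<Rightarrow> bool) \<Rightarrow> 'a \<Rightarrow> 'a \<Rightarrow> 'a set" where
  "S_set V E x y = {v. left_reachable V E x y v \<and> right_reachable V E x y v}"

end

theory Submission
  imports Defs
begin


fun chain :: "('a \<Rightarrow> 'a \<Rightarrow> bool) \<Rightarrow> ('a \<times> 'a) list \<Rightarrow> bool" where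
  "chain lt [] = False"
| "chain lt [e] = True"
| "chain lt (e # f # r) = (crosses lt e f \<and> chain lt (f # r))"

lemma chain_Cons: "C \<noteq> [] \<Longrightarrow> chain lt (e # C) = (crosses lt e (hd C) \<and> chain lt C)"
  by (cases C) auto

lemma chain_idx: "chain lt (e # es) \<longleftrightarrow>
  (\<forall>i. Suc i < length (e # es) \<longrightarrow> crosses lt ((e # es) ! i) ((e # es) ! Suc i))"
proof (induction es arbitrary: e)
  case Nil
  then show ?case by simp
next
  case (Cons f r)
  have "(\<forall>i. Suc i < length (e # f # r) \<longrightarrow> crosses lt ((e # f # r) ! i) ((e # f # r) ! Suc i))
    \<longleftrightarrow> crosses lt e f \<and> (\<forall>i. Suc i < length (f # r) \<longrightarrow> crosses lt ((f # r) ! i) ((f # r) ! Suc i))"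
    (is "?L \<longleftrightarrow> ?R")
  proof
    assume ?L
    then show ?R by (metis Suc_less_eq length_Cons nth_Cons_0 nth_Cons_Suc zero_less_Suc)
  next
    assume R: ?R
    show ?L
    proof (intro allI impI)
      fix i assume "Suc i < length (e # f # r)"
      then show "crosses lt ((e # f # r) ! i) ((e # f # r) ! Suc i)"
        using R by (cases i) auto
    qed
  qed
  then show ?case using Cons by simp
qed

lemma chain_sorted:
  assumes trp: "transp lt"
  shows "chain lt es \<Longrightarrow> e \<in> set es \<Longrightarrow>
    (fst e = fst (hd es) \<or> lt (fst (hd es)) (fst e)) \<and> (snd e = snd (last es) \<or> lt (snd e) (snd (last es)))"
proof (induction es arbitrary: e)
  case Nil
  then show ?case by simp
next
  case (Cons a r)
  show ?case
  proof (cases "r = []")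
    case True
    then show ?thesis using Cons.prems by simp
  next
    case False
    have cr: "crosses lt a (hd r)" and ch: "chain lt r" using Cons.prems(1) False chain_Cons by blast+
    have h: "snd (hd r) = snd (last r) \<or> lt (snd (hd r)) (snd (last r))"
      using Cons.IH[OF ch, of "hd r"] False by simp
    show ?thesis
    proof (cases "e = a")
      case True
      then show ?thesis using h cr transpD[OF trp] False by (auto simp: crosses_def)
    next
      case ea: False
      then have er: "e \<in> set r" using Cons.prems by simp
      from Cons.IH[OF ch er] cr transpD[OF trp] False show ?thesis by (auto simp: crosses_def)
    qed
  qed
qed

lemma chain_distinct:
  assumes trp: "transp lt" and irr: "\<forall>a. \<not> lt a a"
  shows "chain lt es \<Longrightarrow> distinct es"
proof (induction es)
  case Nil
  then show ?case by simp
next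
  case (Cons e r)
  show ?case
  proof (cases "r = []")
    case True
    then show ?thesis by simp
  next
    case False
    have cr: "crosses lt e (hd r)" and ch: "chain lt r" using Cons.prems(1) False chain_Cons by blast+
    have "e \<notin> set r"
    proof
      assume "e \<in> set r"
      from chain_sorted[OF trp ch this] have "fst e = fst (hd r) \<or> lt (fst (hd r)) (fst e)" by auto
      moreover have "lt (fst e) (fst (hd r))" using cr by (simp add: crosses_def)
      ultimately show False using transpD[OF trp] irr by metis
    qed
    then show ?thesis using Cons.IH ch by simp
  qed
qed

lemma chain_walk:
  assumes trp: "transp lt"
    and tot0: "\<forall>a\<in>V. \<forall>b\<in>V. lt a b \<or> a = b \<or> lt b a"
  shows "chain lt B \<Longrightarrow> \<forall>f\<in>set B. fst f \<in> V \<and> snd f \<in> V \<Longrightarrow> snd e \<in> V \<Longrightarrow>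
    lt (fst e) (fst (hd B)) \<Longrightarrow> lt (fst (hd B)) (snd e) \<Longrightarrow> lt (snd e) (snd (last B)) \<Longrightarrow>
    \<exists>C. chain lt C \<and> hd C = e \<and> last C = last B \<and> set C \<subseteq> insert e (set B)"
proof (induction B)
  case Nil
  then show ?case by simp
next
  case (Cons f B')
  show ?case
  proof (cases "lt (snd e) (snd f)")
    case True
    then have "chain lt (e # f # B')" using Cons.prems by (simp add: crosses_def)
    then show ?thesis by (intro exI[of _ "e # f # B'"]) auto
  next
    case False
    then have le: "snd f = snd e \<or> lt (snd f) (snd e)" using tot0[rule_format] Cons.prems by auto
    have ne: "B' \<noteq> []" using False Cons.prems by auto
    have cr: "crosses lt f (hd B')" and chB': "chain lt B'" using Cons.prems(1) ne chain_Cons by blast+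
    have "lt (fst e) (fst (hd B'))" using cr Cons.prems(4) transpD[OF trp] unfolding crosses_def by simp
    moreover have "lt (fst (hd B')) (snd e)" using cr le transpD[OF trp] unfolding crosses_def by metis
    moreover have "lt (snd e) (snd (last B'))" using Cons.prems ne by simp
    ultimately obtain C where "chain lt C \<and> hd C = e \<and> last C = last B' \<and> set C \<subseteq> insert e (set B')"
      using Cons.IH chB' Cons.prems by auto
    then show ?thesis using ne by (intro exI[of _ C]) auto
  qed
qed

lemma chain_comb:
  assumes trp: "transp lt"
    and tot0: "\<forall>a\<in>V. \<forall>b\<in>V. lt a b \<or> a = b \<or> lt b a"
  shows "chain lt A \<Longrightarrow> chain lt B \<Longrightarrow> \<forall>f\<in>set A \<union> set B. fst f \<in> V \<and> snd f \<in> V \<Longrightarrow>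
    lt (fst (hd A)) (fst (hd B)) \<Longrightarrow> lt (fst (hd B)) (snd (last A)) \<Longrightarrow> lt (snd (last A)) (snd (last B)) \<Longrightarrow>
    \<exists>C. chain lt C \<and> hd C = hd A \<and> last C = last B \<and> set C \<subseteq> set A \<union> set B"
proof (induction A)
  case Nil
  then show ?case by simp
next
  case (Cons e A')
  show ?case
  proof (cases "A' = []")
    case True
    then show ?thesis using chain_walk[where lt=lt and V=V and B=B and e=e, OF trp tot0] Cons.prems by auto
  next
    case ne: False
    have cr: "crosses lt e (hd A')" and chA': "chain lt A'" using Cons.prems(1) ne chain_Cons by blast+
    show ?thesis
    proof (cases "lt (fst (hd A')) (fst (hd B))")
      case True
      then obtain C' where C': "chain lt C' \<and> hd C' = hd A' \<and> last C' = last B \<and> set C' \<subseteq> set A' \<union> set B"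
        using Cons.IH chA' Cons.prems ne by auto
      then have "C' \<noteq> []" by auto
      then have "chain lt (e # C')" using C' cr chain_Cons by metis
      then show ?thesis using C' \<open>C' \<noteq> []\<close> ne by (intro exI[of _ "e # C'"]) auto
    next
      case False
      have Bne: "B \<noteq> []" using Cons.prems(2) by auto
      have inV: "fst (hd A') \<in> V" "fst (hd B) \<in> V" using Cons.prems(3) ne Bne
        by (simp_all add: hd_in_set)
      then have le: "fst (hd B) = fst (hd A') \<or> lt (fst (hd B)) (fst (hd A'))" using False tot0[rule_format] by blast
      have s1: "lt (fst (hd B)) (snd e)" using le cr transpD[OF trp] unfolding crosses_def by metis
      have "snd (hd A') = snd (last A') \<or> lt (snd (hd A')) (snd (last A'))"
        using chain_sorted[OF trp chA'] ne by auto
      then have "lt (snd e) (snd (last A'))" using cr transpD[OF trp] unfolding crosses_def by metis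
      then have s2: "lt (snd e) (snd (last B))" using Cons.prems(6) ne transpD[OF trp] by simp
      obtain C where "chain lt C \<and> hd C = e \<and> last C = last B \<and> set C \<subseteq> insert e (set B)"
        using chain_walk[where lt=lt and V=V and B=B and e=e, OF trp tot0] Cons.prems s1 s2 by auto
      then show ?thesis by (intro exI[of _ C]) auto
    qed
  qed
qed



definition rotorder :: "'a::linorder set \<Rightarrow> 'a \<Rightarrow> 'a \<Rightarrow> 'a \<Rightarrow> bool" where
  "rotorder V r u v \<longleftrightarrow> u \<in> V \<and> v \<in> V \<and> (if r \<le> u then (r \<le> v \<longrightarrow> u < v) else (v < r \<and> u < v))"

lemma rotorder_transp: "transp (rotorder V r)"
  unfolding transp_def rotorder_def by (auto split: if_splits)

lemma rotorder_irr: "\<forall>a. \<not> rotorder V r a a"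
  unfolding rotorder_def by auto

lemma rotorder_tot: "\<forall>a\<in>V. \<forall>b\<in>V. rotorder V r a b \<or> a = b \<or> rotorder V r b a"
  unfolding rotorder_def by auto

lemma rotorder_agree:
  assumes "rotorder V r1 u v" "rotorder V r2 u v"
    "w = u \<or> rotorder V r1 u w" "w = v \<or> rotorder V r1 w v"
    "w' = u \<or> rotorder V r1 u w'" "w' = v \<or> rotorder V r1 w' v"
  shows "rotorder V r1 w w' \<longleftrightarrow> rotorder V r2 w w'"
  using assms unfolding rotorder_def by (auto split: if_splits)

definition cyc_pred :: "'a::linorder set \<Rightarrow> 'a \<Rightarrow> 'a" where
  "cyc_pred V r = (if \<exists>v\<in>V. v < r then Max {v\<in>V. v < r} else Max V)"

lemma cyc_pred_props:
  assumes fin: "finite V" and rV: "r \<in> V"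
  shows "cyc_pred V r \<in> V \<and> (\<forall>w\<in>V. w \<noteq> cyc_pred V r \<longrightarrow> rotorder V r w (cyc_pred V r))"
proof (cases "\<exists>v\<in>V. v < r")
  case True
  let ?A = "{v\<in>V. v < r}"
  have fA: "finite ?A" "?A \<noteq> {}" using fin True by auto
  have m: "cyc_pred V r = Max ?A" using True by (simp add: cyc_pred_def)
  have mA: "Max ?A \<in> ?A" using Max_in[OF fA] .
  have mx: "\<And>w. w \<in> ?A \<Longrightarrow> w \<le> Max ?A" using Max_ge[OF fA(1)] by blast
  obtain M where M: "M = Max ?A" by blast
  have mA': "M \<in> V" "M < r" using mA M by auto
  have mx': "\<And>w. w \<in> V \<Longrightarrow> w < r \<Longrightarrow> w \<le> M" using mx M by auto
  have "M \<in> V \<and> (\<forall>w\<in>V. w \<noteq> M \<longrightarrow> rotorder V r w M)"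
    using mA' mx' rV unfolding rotorder_def by (auto simp: not_le order.strict_iff_order)
  then show ?thesis using m M by simp
next
  case False
  have m: "cyc_pred V r = Max V" using False by (simp add: cyc_pred_def)
  have mA: "Max V \<in> V" using Max_in fin rV by blast
  have mx: "\<And>w. w \<in> V \<Longrightarrow> w \<le> Max V" using Max_ge[OF fin] by blast
  show ?thesis unfolding m using mA mx rV False unfolding rotorder_def
    by (auto simp: order.strict_iff_order not_less)
qed

lemma largest_rot:
  assumes fin: "finite V" and rV: "r \<in> V"
  shows "largest V (rotorder V r) = cyc_pred V r"
  unfolding largest_def
proof (rule the_equality)
  show "cyc_pred V r \<in> V \<and> (\<forall>w\<in>V. w \<noteq> cyc_pred V r \<longrightarrow> rotorder V r w (cyc_pred V r))"
    using cyc_pred_props[OF fin rV] .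
next
  fix m assume m: "m \<in> V \<and> (\<forall>w\<in>V. w \<noteq> m \<longrightarrow> rotorder V r w m)"
  show "m = cyc_pred V r"
  proof (rule ccontr)
    assume ne: "m \<noteq> cyc_pred V r"
    have "rotorder V r (cyc_pred V r) m" using m ne cyc_pred_props[OF fin rV] by auto
    moreover have "rotorder V r m (cyc_pred V r)" using m ne cyc_pred_props[OF fin rV] by auto
    ultimately show False using rotorder_transp rotorder_irr by (metis transpD)
  qed
qed

lemma rot1_rot:
  assumes fin: "finite V" and rV: "r \<in> V"
  shows "rot1 V (rotorder V r) = rotorder V (cyc_pred V r)"
proof (intro ext)
  fix u v
  let ?m = "cyc_pred V r"
  have lg: "largest V (rotorder V r) = ?m" by (rule largest_rot[OF fin rV])
  show "rot1 V (rotorder V r) u v = rotorder V ?m u v"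
  proof (cases "\<exists>v\<in>V. v < r")
    case True
    let ?A = "{v\<in>V. v < r}"
    have fA: "finite ?A" "?A \<noteq> {}" using fin True by auto
    have m: "?m = Max ?A" using True by (simp add: cyc_pred_def)
    have mA: "Max ?A \<in> ?A" using Max_in[OF fA] .
    have mx: "\<And>w. w \<in> ?A \<Longrightarrow> w \<le> Max ?A" using Max_ge[OF fA(1)] by blast
    obtain M where M: "M = ?m" by blast
    have mr: "M < r" "M \<in> V" using m mA M by auto
    have mx': "\<And>w. w \<in> V \<Longrightarrow> w < r \<Longrightarrow> w \<le> M" using mx m M by auto
    have k1: "\<And>w. w \<in> V \<Longrightarrow> w \<noteq> M \<Longrightarrow> w < r \<Longrightarrow> w < M" using mx' by force
    have k2: "\<And>w. w \<in> V \<Longrightarrow> w \<noteq> M \<Longrightarrow> M \<le> w \<Longrightarrow> r \<le> w" using mx' by force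
    have "rot1 V (rotorder V r) u v = rotorder V M u v" unfolding rot1_def lg M[symmetric] rotorder_def
      using k1 k2 mr by (auto split: if_splits simp: not_le) (meson k1 k2 not_le order.strict_trans1 order.strict_trans2 order.order_iff_strict)+
    then show ?thesis using M by simp
  next
    case False
    have m: "?m = Max V" using False by (simp add: cyc_pred_def)
    have mA: "Max V \<in> V" using Max_in fin rV by blast
    have mx: "\<And>w. w \<in> V \<Longrightarrow> w \<le> Max V" using Max_ge[OF fin] by blast
    have rle: "\<And>w. w \<in> V \<Longrightarrow> r \<le> w" using False by (auto simp: not_less)
    show ?thesis unfolding rot1_def lg rotorder_def m
      using mA mx rle antisym by (auto split: if_splits simp: order.strict_iff_order)
  qed
qed

lemma base_rot:
  assumes "finite V" "V \<noteq> {}"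
  shows "base_order V = rotorder V (Min V)"
  using assms by (auto simp: base_order_def rotorder_def intro!: ext)

lemma rotation_is_rot:
  assumes fin: "finite V" and ne: "V \<noteq> {}" and rot: "rotation V lt"
  shows "\<exists>r\<in>V. lt = rotorder V r"
proof -
  obtain k where k: "lt = (rot1 V ^^ k) (base_order V)" using rot by (auto simp: rotation_def)
  have "\<exists>r\<in>V. (rot1 V ^^ k) (base_order V) = rotorder V r" for k
  proof (induction k)
    case 0
    then show ?case using base_rot[OF fin ne] Min_in[OF fin ne] by auto
  next
    case (Suc k)
    then obtain r where "r \<in> V" "(rot1 V ^^ k) (base_order V) = rotorder V r" by blast
    then show ?case using rot1_rot[OF fin] cyc_pred_props[OF fin] by auto
  qed
  then show ?thesis using k by auto
qed

lemma rot_is_rotation: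
  assumes fin: "finite V"
  shows "d \<in> V \<Longrightarrow> rotation V (rotorder V d)"
proof (induction "card {v\<in>V. d < v}" arbitrary: d rule: less_induct)
  case less
  have ne: "V \<noteq> {}" using less.prems by auto
  show ?case
  proof (cases "{v\<in>V. d < v} = {}")
    case True
    then have dM: "d = Max V" using less.prems fin
      by (metis (mono_tags, lifting) Max_eqI empty_Collect_eq not_le_imp_less)
    show ?thesis
    proof (cases "Min V = Max V")
      case True
      then show ?thesis using base_rot[OF fin ne] dM unfolding rotation_def
        by (intro exI[of _ 0]) simp
    next
      case False
      have "\<not> (\<exists>v\<in>V. v < Min V)" using fin by (simp add: not_less)
      then have "cyc_pred V (Min V) = Max V" by (simp add: cyc_pred_def)
      then have "rot1 V (base_order V) = rotorder V d"
        using rot1_rot[OF fin Min_in[OF fin ne]] base_rot[OF fin ne] dM by simp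
      then show ?thesis unfolding rotation_def by (intro exI[of _ 1]) simp
    qed
  next
    case False
    let ?A = "{v\<in>V. d < v}"
    have fA: "finite ?A" using fin by auto
    define d' where "d' = Min ?A"
    have d'A: "d' \<in> ?A" using Min_in[OF fA False] d'_def by simp
    have d'min: "\<And>w. w \<in> ?A \<Longrightarrow> d' \<le> w" using Min_le[OF fA] d'_def by blast
    have sub: "{v\<in>V. d' < v} \<subset> ?A" using d'A by auto
    have "card {v\<in>V. d' < v} < card ?A" using psubset_card_mono[OF fA sub] .
    then have "rotation V (rotorder V d')" using less.hyps d'A by blast
    then obtain k where k: "rotorder V d' = (rot1 V ^^ k) (base_order V)" by (auto simp: rotation_def)
    have ex: "\<exists>v\<in>V. v < d'" using less.prems d'A by auto
    have "Max {v\<in>V. v < d'} = d"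
    proof (rule Max_eqI)
      show "finite {v\<in>V. v < d'}" using fin by auto
      show "d \<in> {v\<in>V. v < d'}" using less.prems d'A by auto
      fix y assume "y \<in> {v\<in>V. v < d'}"
      then show "y \<le> d" using d'min by (metis (mono_tags, lifting) leD le_less_linear mem_Collect_eq)
    qed
    then have "cyc_pred V d' = d" using ex by (simp add: cyc_pred_def)
    then have "rot1 V (rotorder V d') = rotorder V d" using rot1_rot[OF fin] d'A by auto
    then have "(rot1 V ^^ Suc k) (base_order V) = rotorder V d" using k by simp
    then show ?thesis unfolding rotation_def by metis
  qed
qed



definition cs :: "'a set \<Rightarrow> ('a \<Rightarrow> 'a \<Rightarrow> bool) \<Rightarrow> ('a \<Rightarrow> 'a \<Rightarrow> bool) \<Rightarrow> 'a \<Rightarrow> 'a \<Rightarrow> ('a \<times> 'a) list \<Rightarrow> bool" where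
  "cs V E lt u v es \<longleftrightarrow> chain lt es \<and>
     (\<forall>e\<in>set es. fst e \<in> V \<and> snd e \<in> V \<and> E (fst e) (snd e) \<and> lt (fst e) (snd e)) \<and>
     fst (hd es) = u \<and> snd (last es) = v"

lemma csw_cs: "cross_seq_wrt V E lt u v es \<Longrightarrow> cs V E lt u v es"
  unfolding cross_seq_wrt_def cs_def by (cases es) (auto simp only: chain_idx)

lemma cs_csw: "cs V E (rotorder V r) u v es \<Longrightarrow> cross_seq_wrt V E (rotorder V r) u v es"
proof -
  assume c: "cs V E (rotorder V r) u v es"
  then have ne: "es \<noteq> []" by (auto simp: cs_def)
  have d: "distinct es" using chain_distinct[OF rotorder_transp rotorder_irr] c by (auto simp: cs_def)
  obtain e es' where es: "es = e # es'" using ne by (cases es) auto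
  show ?thesis using c d ne unfolding cross_seq_wrt_def cs_def es by (simp only: chain_idx) auto
qed

lemma get_seq:
  assumes fin: "finite V" and h: "has_cross_seq V E u v"
  shows "\<exists>r\<in>V. rotorder V r u v \<and> (\<exists>es. cs V E (rotorder V r) u v es)"
proof -
  from h consider (a) "u < v" "\<exists>es. cross_seq_wrt V E (base_order V) u v es"
    | (b) lt es where "rotation V lt" "lt u v" "cross_seq_wrt V E lt u v es"
    unfolding has_cross_seq_def by blast
  then show ?thesis
  proof cases
    case a
    then obtain es where es: "cross_seq_wrt V E (base_order V) u v es" by blast
    then have c: "cs V E (base_order V) u v es" by (rule csw_cs)
    then have ne: "es \<noteq> []" by (auto simp: cs_def)
    have uV: "u \<in> V" "v \<in> V" using c ne unfolding cs_def by (metis hd_in_set last_in_set)+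
    then have Vne: "V \<noteq> {}" by auto
    have "rotorder V (Min V) u v" using a uV Min_le[OF fin] by (auto simp: rotorder_def)
    then show ?thesis using c base_rot[OF fin Vne] Min_in[OF fin Vne] by metis
  next
    case b
    then have c: "cs V E lt u v es" by (simp add: csw_cs)
    then have ne: "es \<noteq> []" by (auto simp: cs_def)
    have uV: "u \<in> V" using c ne unfolding cs_def by (metis hd_in_set)
    then have Vne: "V \<noteq> {}" by auto
    obtain r where "r \<in> V" "lt = rotorder V r" using rotation_is_rot[OF fin Vne b(1)] by blast
    then show ?thesis using b c by blast
  qed
qed

lemma put_seq:
  assumes fin: "finite V" and uV: "u \<in> V" and vu: "v < u" and c: "cs V E (rotorder V u) u v es"
  shows "has_cross_seq V E u v"
proof -
  have ne: "es \<noteq> []" using c by (auto simp: cs_def)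
  have vV: "v \<in> V" using c ne unfolding cs_def by (metis last_in_set)
  have "rotorder V u u v" using uV vV vu by (auto simp: rotorder_def)
  then show ?thesis unfolding has_cross_seq_def using vu cs_csw[OF c] rot_is_rotation[OF fin uV] by blast
qed

lemma chain_transfer:
  "chain lt1 es \<Longrightarrow> \<forall>e\<in>set es. P (fst e) \<and> P (snd e) \<Longrightarrow>
   \<forall>w w'. P w \<longrightarrow> P w' \<longrightarrow> (lt1 w w' \<longleftrightarrow> lt2 w w') \<Longrightarrow> chain lt2 es"
proof (induction es)
  case Nil
  then show ?case by simp
next
  case (Cons e r)
  show ?case
  proof (cases "r = []")
    case True
    then show ?thesis by simp
  next
    case False
    have cr: "crosses lt1 e (hd r)" and ch: "chain lt1 r" using Cons.prems(1) False chain_Cons by blast+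
    have "hd r \<in> set r" using False by simp
    then have "crosses lt2 e (hd r)" using cr Cons.prems(2,3) unfolding crosses_def by auto
    then show ?thesis using Cons.IH ch Cons.prems False chain_Cons by (metis list.set_intros(2))
  qed
qed

lemma cs_transfer:
  assumes c: "cs V E (rotorder V r1) u v es" and r2: "rotorder V r2 u v"
  shows "cs V E (rotorder V r2) u v es"
proof -
  let ?l1 = "rotorder V r1" and ?l2 = "rotorder V r2"
  have trp: "transp ?l1" by (rule rotorder_transp)
  have tr: "\<And>a b c. ?l1 a b \<Longrightarrow> ?l1 b c \<Longrightarrow> ?l1 a c" using trp by (meson transpD)
  have ch: "chain ?l1 es" and ed: "\<forall>e\<in>set es. fst e \<in> V \<and> snd e \<in> V \<and> E (fst e) (snd e) \<and> ?l1 (fst e) (snd e)"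
    and hu: "fst (hd es) = u" and lv: "snd (last es) = v" using c by (auto simp: cs_def)
  have ne: "es \<noteq> []" using ch by auto
  define P where "P w \<longleftrightarrow> (w = u \<or> ?l1 u w) \<and> (w = v \<or> ?l1 w v)" for w
  have Pe: "\<forall>e\<in>set es. P (fst e) \<and> P (snd e)"
  proof
    fix e assume e: "e \<in> set es"
    have s: "(fst e = u \<or> ?l1 u (fst e)) \<and> (snd e = v \<or> ?l1 (snd e) v)"
      using chain_sorted[OF trp ch e] hu lv by simp
    have "?l1 (fst e) (snd e)" using ed e by auto
    then show "P (fst e) \<and> P (snd e)" unfolding P_def using s tr by metis
  qed
  have l1uv: "?l1 u v"
  proof -
    have "hd es \<in> set es" using ne by simp
    then have "P (snd (hd es))" "?l1 u (snd (hd es))" using Pe ed hu by auto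
    then show ?thesis unfolding P_def using tr by metis
  qed
  have ag: "\<forall>w w'. P w \<longrightarrow> P w' \<longrightarrow> (?l1 w w' \<longleftrightarrow> ?l2 w w')"
    unfolding P_def using rotorder_agree[OF l1uv r2] by blast
  have ch2: "chain ?l2 es" using chain_transfer[OF ch Pe ag] .
  have "\<forall>e\<in>set es. ?l2 (fst e) (snd e)" using ed Pe ag by blast
  then show ?thesis using ch2 ed hu lv unfolding cs_def by blast
qed

lemma combine:
  assumes fin: "finite V" and dV: "d \<in> V" and xV: "x \<in> V"
    and A: "cs V E (rotorder V d) d x A" and B: "cs V E (rotorder V d) y a B"
    and o1: "rotorder V d d y" and o2: "rotorder V d y x" and o3: "rotorder V d x a"
  shows "\<exists>C. cs V E (rotorder V d) d a C"
proof -
  let ?R = "rotorder V d"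
  have chA: "chain ?R A" and chB: "chain ?R B" using A B by (auto simp: cs_def)
  have inV: "\<forall>f\<in>set A \<union> set B. fst f \<in> V \<and> snd f \<in> V" using A B by (auto simp: cs_def)
  have "\<exists>C. chain ?R C \<and> hd C = hd A \<and> last C = last B \<and> set C \<subseteq> set A \<union> set B"
    using chain_comb[OF rotorder_transp rotorder_tot chA chB inV] A B o1 o2 o3 by (auto simp: cs_def)
  then obtain C where C: "chain ?R C" "hd C = hd A" "last C = last B" "set C \<subseteq> set A \<union> set B" by blast
  have "\<forall>e\<in>set C. fst e \<in> V \<and> snd e \<in> V \<and> E (fst e) (snd e) \<and> ?R (fst e) (snd e)"
    using C(4) A B unfolding cs_def by blast
  then have "cs V E ?R d a C" using C A B unfolding cs_def by simp
  then show ?thesis by blast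
qed

theorem lemma4p4:
  fixes V :: "'a::linorder set" and E :: "'a \<Rightarrow> 'a \<Rightarrow> bool" and x y :: 'a
  assumes "finite V"
    and "\<And>u v. E u v \<Longrightarrow> E v u"
    and "\<And>u. \<not> E u u"
    and "H_free V E"
    and "valid_segment V E x y"
  shows "capped (S_set V E x y \<union> {x, y}) E"
proof (rule ccontr)
  note fin = assms(1)
  let ?S = "S_set V E x y"
  have xy: "x \<in> V" "y \<in> V" "x < y" "has_cross_seq V E y x" using assms(5) by (auto simp: valid_segment_def)
  have Sp: "\<And>v. v \<in> ?S \<Longrightarrow> v \<in> V \<and> x < v \<and> v < y \<and> has_cross_seq V E y v \<and> has_cross_seq V E v x"
    by (auto simp: S_set_def left_reachable_def right_reachable_def)
  assume "\<not> capped (?S \<union> {x, y}) E"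
  then obtain a b c d where abcd: "a \<in> ?S \<union> {x, y}" "b \<in> ?S \<union> {x, y}" "c \<in> ?S \<union> {x, y}" "d \<in> ?S \<union> {x, y}"
    "a < b" "b < c" "c < d" "E a c" "E b d" "\<not> E a d"
    unfolding capped_def by blast
  have inV: "a \<in> V" "b \<in> V" "c \<in> V" "d \<in> V" using abcd(1-4) Sp xy by auto
  have ax: "x \<le> a" using abcd(1) Sp xy by fastforce
  have dy: "d \<le> y" using abcd(4) Sp xy by fastforce
  have ad: "a < d" using abcd by auto
  have s1: "has_cross_seq V E a d"
  proof -
    have "cross_seq_wrt V E (base_order V) a d [(a, c), (b, d)]"
      using abcd inV unfolding cross_seq_wrt_def crosses_def base_order_def
      by (auto simp: nth_Cons split: nat.splits)
    then show ?thesis using ad unfolding has_cross_seq_def by blast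
  qed
  have s2: "has_cross_seq V E d a"
  proof (cases "d = y")
    case dY: True
    show ?thesis
    proof (cases "a = x")
      case True
      then show ?thesis using dY xy by simp
    next
      case False
      then have "a \<in> ?S" using abcd(1) ad dY by auto
      then show ?thesis using Sp dY by blast
    qed
  next
    case dY: False
    have dS: "d \<in> ?S" using abcd(4) dY ad ax by auto
    show ?thesis
    proof (cases "a = x")
      case True
      then show ?thesis using Sp dS by blast
    next
      case aX: False
      have aS: "a \<in> ?S" using abcd(1) ad dy aX by auto
      obtain r1 A where r1: "r1 \<in> V" "rotorder V r1 d x" "cs V E (rotorder V r1) d x A"
        using get_seq[OF fin] Sp dS by blast
      obtain r2 B where r2: "r2 \<in> V" "rotorder V r2 y a" "cs V E (rotorder V r2) y a B"
        using get_seq[OF fin] Sp aS by blast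
      have xd: "x < d" using ax ad by simp
      have R1: "rotorder V d d x" using xd inV xy by (auto simp: rotorder_def)
      have R2: "rotorder V d y a" using ad dy inV xy by (auto simp: rotorder_def)
      have A: "cs V E (rotorder V d) d x A" using cs_transfer[OF r1(3) R1] .
      have B: "cs V E (rotorder V d) y a B" using cs_transfer[OF r2(3) R2] .
      have o1: "rotorder V d d y" using dY dy inV xy by (auto simp: rotorder_def)
      have o2: "rotorder V d y x" using dy xd inV xy by (auto simp: rotorder_def)
      have o3: "rotorder V d x a" using aX ax ad inV xy by (auto simp: rotorder_def)
      obtain C where "cs V E (rotorder V d) d a C" using combine[OF fin inV(4) xy(1) A B o1 o2 o3] by blast
      then show ?thesis using put_seq[OF fin inV(4) ad] by blast
    qed
  qed
  have "in_H V E" unfolding in_H_def using inV ad abcd(10) s1 s2 by (metis less_irrefl)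
  then show False using assms(4) unfolding H_free_def by blast
qed

end
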